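(* The logic $\mathsf{sICL}=\mathsf{ICK}\oplus(q\to(p\mathrel{\Box\!\!\!\rightarrow} q))\oplus((p\mathrel{\Box\!\!\!\rightarrow}(p\mathrel{\Box\!\!\!\rightarrow} q))\to(p\mathrel{\Box\!\!\!\rightarrow} q))$ is sound and complete with respect to the class of conditional frames $(X,\leq,\mathcal{R})$ such that for all $x,y\in X$ and $R_a\in\mathcal{R}$: $xR_ay$ implies $x\leq y$, and $xR_ay$ implies $x(R_a\circ R_a\circ\leq)y$.
   Context: Formulas: $\phi ::= p\mid\bot\mid\phi\wedge\phi\mid\phi\vee\phi\mid\phi\to\phi\mid\phi\mathrel{\Box\!\!\!\rightarrow}\phi$. $\mathsf{ICK}\oplus\Gamma$ is the smallest set containing intuitionistic propositional logic, $\Gamma$, $(p\mathrel{\Box\!\!\!\rightarrow}(q\wedge r))\leftrightarrow((p\mathrel{\Box\!\!\!\rightarrow} q)\wedge(p\mathrel{\Box\!\!\!\rightarrow} r))$ and $(p\mathrel{\Box\!\!\!\rightarrow}\top)\leftrightarrow\top$, closed under uniform substitution, modus ponens and congruence rules for both arguments of $\mathrel{\Box\!\!\!\rightarrow}$. A conditional frame is $(X,\leq,\mathcal{R})$, $(X,\leq)$ a nonempty preorder, $\mathcal{R}=\{R_a\mid a\text{ an upset}\}$ with $(\leq\circ R_a)\subseteq(R_a\circ\leq)$; valuations assign upsets to letters and $x\models\phi\mathrel{\Box\!\!\!\rightarrow}\psi$ iff every $y$ with $xR_{V(\phi)}y$ satisfies $\psi$. Relation composition $R\circ S$ relates $x$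 to $z$ if $xRy$ and $ySz$ for some $y$. *)

theory Defs
  imports Main
begin

datatype form =
    Var nat
  | Bot
  | And form form
  | Or form form
  | Imp form form
  | Cond form form

definition Top :: form where "Top = Imp Bot Bot"
definition Iff :: "form \<Rightarrow> form \<Rightarrow> form" where
  "Iff a b = And (Imp a b) (Imp b a)"

fun subst :: "(nat \<Rightarrow> form) \<Rightarrow> form \<Rightarrow> form" where
  "subst s (Var n) = s n"
| "subst s Bot = Bot"
| "subst s (And a b) = And (subst s a) (subst s b)"
| "subst s (Or a b) = Or (subst s a) (subst s b)"
| "subst s (Imp a b) = Imp (subst s a) (subst s b)"
| "subst s (Cond a b) = Cond (subst s a) (subst s b)"

inductive_set ICK_plus :: "form set \<Rightarrow> form set" for \<Gamma> :: "form set" where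
  ax1: "Imp a (Imp b a) \<in> ICK_plus \<Gamma>"
| ax2: "Imp (Imp a (Imp b c)) (Imp (Imp a b) (Imp a c)) \<in> ICK_plus \<Gamma>"
| ax3: "Imp (And a b) a \<in> ICK_plus \<Gamma>"
| ax4: "Imp (And a b) b \<in> ICK_plus \<Gamma>"
| ax5: "Imp a (Imp b (And a b)) \<in> ICK_plus \<Gamma>"
| ax6: "Imp a (Or a b) \<in> ICK_plus \<Gamma>"
| ax7: "Imp b (Or a b) \<in> ICK_plus \<Gamma>"
| ax8: "Imp (Imp a c) (Imp (Imp b c) (Imp (Or a b) c)) \<in> ICK_plus \<Gamma>"
| ax9: "Imp Bot a \<in> ICK_plus \<Gamma>"
| gamma: "g \<in> \<Gamma> \<Longrightarrow> g \<in> ICK_plus \<Gamma>"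
| CandAx: "Iff (Cond (Var 0) (And (Var 1) (Var 2)))
               (And (Cond (Var 0) (Var 1)) (Cond (Var 0) (Var 2))) \<in> ICK_plus \<Gamma>"
| CtopAx: "Iff (Cond (Var 0) Top) Top \<in> ICK_plus \<Gamma>"
| usubst: "a \<in> ICK_plus \<Gamma> \<Longrightarrow> subst s a \<in> ICK_plus \<Gamma>"
| mp: "Imp a b \<in> ICK_plus \<Gamma> \<Longrightarrow> a \<in> ICK_plus \<Gamma> \<Longrightarrow> b \<in> ICK_plus \<Gamma>"
| congL: "Iff a b \<in> ICK_plus \<Gamma> \<Longrightarrow> Iff (Cond a c) (Cond b c) \<in> ICK_plus \<Gamma>"
| congR: "Iff a b \<in> ICK_plus \<Gamma> \<Longrightarrow> Iff (Cond c a) (Cond c b) \<in> ICK_plus \<Gamma>"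

text \<open>p = Var 0, q = Var 1.\<close>
definition sICL :: "form set" where
  "sICL = ICK_plus {Imp (Var 1) (Cond (Var 0) (Var 1)),
                    Imp (Cond (Var 0) (Cond (Var 0) (Var 1))) (Cond (Var 0) (Var 1))}"

definition upset :: "'w set \<Rightarrow> ('w \<Rightarrow> 'w \<Rightarrow> bool) \<Rightarrow> 'w set \<Rightarrow> bool" where
  "upset X le a \<longleftrightarrow> a \<subseteq> X \<and> (\<forall>x\<in>a. \<forall>y\<in>X. le x y \<longrightarrow> y \<in> a)"

definition cond_frame :: "'w set \<Rightarrow> ('w \<Rightarrow> 'w \<Rightarrow> bool) \<Rightarrow> ('w set \<Rightarrow> 'w \<Rightarrow> 'w \<Rightarrow> bool) \<Rightarrow> bool" where
  "cond_frame X le R \<longleftrightarrow>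
     X \<noteq> {} \<and>
     (\<forall>x y. le x y \<longrightarrow> x \<in> X \<and> y \<in> X) \<and>
     (\<forall>x\<in>X. le x x) \<and>
     (\<forall>x y z. le x y \<longrightarrow> le y z \<longrightarrow> le x z) \<and>
     (\<forall>a. upset X le a \<longrightarrow> (\<forall>x y. R a x y \<longrightarrow> x \<in> X \<and> y \<in> X)) \<and>
     (\<forall>a. upset X le a \<longrightarrow>
        (\<forall>x y z. le x y \<longrightarrow> R a y z \<longrightarrow> (\<exists>w. R a x w \<and> le w z)))"

fun sat :: "'w set \<Rightarrow> ('w \<Rightarrow> 'w \<Rightarrow> bool) \<Rightarrow> ('w set \<Rightarrow> 'w \<Rightarrow> 'w \<Rightarrow> bool)
            \<Rightarrow> (nat \<Rightarrow> 'w set) \<Rightarrow> 'w \<Rightarrow> form \<Rightarrow> bool" where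
  "sat X le R V x (Var n) = (x \<in> V n)"
| "sat X le R V x Bot = False"
| "sat X le R V x (And a b) = (sat X le R V x a \<and> sat X le R V x b)"
| "sat X le R V x (Or a b) = (sat X le R V x a \<or> sat X le R V x b)"
| "sat X le R V x (Imp a b) =
     (\<forall>y\<in>X. le x y \<longrightarrow> sat X le R V y a \<longrightarrow> sat X le R V y b)"
| "sat X le R V x (Cond a b) =
     (\<forall>y. R {z\<in>X. sat X le R V z a} x y \<longrightarrow> sat X le R V y b)"

definition valid_frame :: "'w set \<Rightarrow> ('w \<Rightarrow> 'w \<Rightarrow> bool) \<Rightarrow> ('w set \<Rightarrow> 'w \<Rightarrow> 'w \<Rightarrow> bool) \<Rightarrow> form \<Rightarrow> bool" where
  "valid_frame X le R \<phi> \<longleftrightarrow>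
     (\<forall>V. (\<forall>n. upset X le (V n)) \<longrightarrow> (\<forall>x\<in>X. sat X le R V x \<phi>))"

definition sICL_frame :: "'w set \<Rightarrow> ('w \<Rightarrow> 'w \<Rightarrow> bool) \<Rightarrow> ('w set \<Rightarrow> 'w \<Rightarrow> 'w \<Rightarrow> bool) \<Rightarrow> bool" where
  "sICL_frame X le R \<longleftrightarrow> cond_frame X le R \<and>
     (\<forall>a. upset X le a \<longrightarrow>
        (\<forall>x\<in>X. \<forall>y\<in>X. R a x y \<longrightarrow> le x y) \<and>
        (\<forall>x\<in>X. \<forall>y\<in>X. R a x y \<longrightarrow> (\<exists>u v. R a x u \<and> R a u v \<and> le v y)))"

end

theory Submission
  imports Defs
begin


lemma persist:
  assumes cf: "cond_frame X le R" and V: "\<forall>n. upset X le (V n)"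
  shows "le x y \<Longrightarrow> sat X le R V x \<phi> \<Longrightarrow> sat X le R V y \<phi>"
proof (induction \<phi> arbitrary: x y)
  case (Var n)
  have "y \<in> X" using cf Var.prems(1) unfolding cond_frame_def by blast
  moreover have "upset X le (V n)" using V by blast
  ultimately show ?case using Var.prems unfolding upset_def by auto
next
  case Bot then show ?case by simp
next
  case (And a b) then show ?case by auto
next
  case (Or a b) then show ?case by auto
next
  case (Imp a b)
  have tr: "\<And>x y z. le x y \<Longrightarrow> le y z \<Longrightarrow> le x z" using cf unfolding cond_frame_def by blast
  show ?case using Imp.prems tr[OF Imp.prems(1)] by simp
next
  case (Cond a b)
  let ?A = "{z\<in>X. sat X le R V z a}"
  have up: "upset X le ?A" unfolding upset_def using Cond.IH(1) by auto
  show ?case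
  proof (simp only: sat.simps, intro allI impI)
    fix z assume "R ?A y z"
    then obtain w where "R ?A x w" "le w z" using cf up Cond.prems(1) unfolding cond_frame_def by blast
    then show "sat X le R V z b" using Cond.prems(2) Cond.IH(2) by auto
  qed
qed

lemma truth_upset:
  assumes cf: "cond_frame X le R" and V: "\<forall>n. upset X le (V n)"
  shows "upset X le {z\<in>X. sat X le R V z a}"
  unfolding upset_def using persist[OF cf V] by blast

lemma subst_sat:
  assumes cf: "cond_frame X le R" and V: "\<forall>n. upset X le (V n)"
  shows "x \<in> X \<Longrightarrow> sat X le R V x (subst s \<phi>) =
     sat X le R (\<lambda>n. {z\<in>X. sat X le R V z (s n)}) x \<phi>"
proof (induction \<phi> arbitrary: x)
  case (Cond a b)
  let ?V = "\<lambda>n. {z\<in>X. sat X le R V z (s n)}"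
  have eq: "{z\<in>X. sat X le R V z (subst s a)} = {z\<in>X. sat X le R ?V z a}"
    using Cond.IH(1) by auto
  have up: "upset X le {z\<in>X. sat X le R V z (subst s a)}" by (rule truth_upset[OF cf V])
  have inX: "\<And>y. R {z\<in>X. sat X le R V z (subst s a)} x y \<Longrightarrow> y \<in> X"
    using cf up unfolding cond_frame_def by blast
  show ?case using Cond.IH(2) inX by (simp add: eq[symmetric])
qed auto

lemma valid_mp: "valid_frame X le R (Imp a b) \<Longrightarrow> valid_frame X le R a \<Longrightarrow> cond_frame X le R \<Longrightarrow> valid_frame X le R b"
proof -
  assume "cond_frame X le R"
  then have r: "\<And>x. x \<in> X \<Longrightarrow> le x x" unfolding cond_frame_def by blast
  assume "valid_frame X le R (Imp a b)" "valid_frame X le R a"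
  then show ?thesis unfolding valid_frame_def using r by simp
qed

lemma iff_valid_eq:
  assumes "cond_frame X le R" "valid_frame X le R (Iff a b)" "\<forall>n. upset X le (V n)"
  shows "{z\<in>X. sat X le R V z a} = {z\<in>X. sat X le R V z b}"
proof -
  have r: "\<And>x. x \<in> X \<Longrightarrow> le x x" using assms(1) unfolding cond_frame_def by blast
  show ?thesis using assms(2,3) r unfolding valid_frame_def Iff_def by auto
qed

lemma soundness:
  assumes F: "sICL_frame X le R"
  shows "\<phi> \<in> sICL \<Longrightarrow> valid_frame X le R \<phi>"
proof -
  have cf: "cond_frame X le R" using F unfolding sICL_frame_def by blast
  have refl: "\<And>x. x \<in> X \<Longrightarrow> le x x" and tr: "\<And>x y z. le x y \<Longrightarrow> le y z \<Longrightarrow> le x z"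
    and lX: "\<And>x y. le x y \<Longrightarrow> x \<in> X \<and> y \<in> X"
    using cf unfolding cond_frame_def by blast+
  have RX: "\<And>a x y. upset X le a \<Longrightarrow> R a x y \<Longrightarrow> x \<in> X \<and> y \<in> X"
    using cf unfolding cond_frame_def by blast
  have R1: "\<And>a x y. upset X le a \<Longrightarrow> R a x y \<Longrightarrow> le x y"
    using F RX unfolding sICL_frame_def by blast
  have R2: "\<And>a x y. upset X le a \<Longrightarrow> R a x y \<Longrightarrow> \<exists>u v. R a x u \<and> R a u v \<and> le v y"
    using F RX unfolding sICL_frame_def by blast
  assume "\<phi> \<in> sICL"
  then show ?thesis unfolding sICL_def
  proof (induction rule: ICK_plus.induct)
    case (gamma g)
    then show ?case
    proof
      assume g: "g = Imp (Var 1) (Cond (Var 0) (Var 1))"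
      show ?thesis unfolding valid_frame_def g
      proof (intro allI impI ballI)
        fix V :: "nat \<Rightarrow> _" and x assume V: "\<forall>n. upset X le (V n)" and "x \<in> X"
        have up: "upset X le {z\<in>X. sat X le R V z (Var 0)}" by (rule truth_upset[OF cf V])
        show "sat X le R V x (Imp (Var 1) (Cond (Var 0) (Var 1)))"
          using R1[OF up] persist[OF cf V, of _ _ "Var 1"] by auto
      qed
    next
      assume "g \<in> {Imp (Cond (Var 0) (Cond (Var 0) (Var 1))) (Cond (Var 0) (Var 1))}"
      then have g: "g = Imp (Cond (Var 0) (Cond (Var 0) (Var 1))) (Cond (Var 0) (Var 1))" by simp
      show ?thesis unfolding valid_frame_def g
      proof (intro allI impI ballI)
        fix V :: "nat \<Rightarrow> _" and x assume V: "\<forall>n. upset X le (V n)" and "x \<in> X"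
        let ?A = "{z\<in>X. sat X le R V z (Var 0)}"
        have up: "upset X le ?A" by (rule truth_upset[OF cf V])
        have "sat X le R V y (Cond (Var 0) (Var 1))"
          if "sat X le R V y (Cond (Var 0) (Cond (Var 0) (Var 1)))" for y
        proof (unfold sat.simps(6), intro allI impI)
          fix z assume "R ?A y z"
          then obtain u v where "R ?A y u" "R ?A u v" "le v z" using R2[OF up] by blast
          then show "sat X le R V z (Var 1)" using that persist[OF cf V, of v z "Var 1"] by auto
        qed
        then show "sat X le R V x (Imp (Cond (Var 0) (Cond (Var 0) (Var 1))) (Cond (Var 0) (Var 1)))"
          by simp
      qed
    qed
  next
    case (usubst a s)
    show ?case unfolding valid_frame_def
    proof (intro allI impI ballI)
      fix V :: "nat \<Rightarrow> _" and x assume V: "\<forall>n. upset X le (V n)" and x: "x \<in> X"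
      have Vu: "\<And>n. upset X le {z\<in>X. sat X le R V z (s n)}" using truth_upset[OF cf V] by blast
      show "sat X le R V x (subst s a)" unfolding subst_sat[OF cf V x]
        by (rule usubst.IH[unfolded valid_frame_def, rule_format, OF Vu x])
    qed
  next
    case (mp a b) then show ?case using valid_mp cf by blast
  next
    case (congL a b c)
    then show ?case using iff_valid_eq[OF cf congL.IH] unfolding valid_frame_def Iff_def
      by simp
  next
    case (congR a b c)
    show ?case unfolding valid_frame_def Iff_def
    proof (intro allI impI ballI)
      fix V :: "nat \<Rightarrow> _" and x assume V: "\<forall>n. upset X le (V n)" and x: "x \<in> X"
      have eq: "{z\<in>X. sat X le R V z a} = {z\<in>X. sat X le R V z b}" by (rule iff_valid_eq[OF cf congR.IH V])
      have inX: "\<And>A y z. upset X le A \<Longrightarrow> R A y z \<Longrightarrow> z \<in> X" using RX by blast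
      have up: "upset X le {z\<in>X. sat X le R V z c}" by (rule truth_upset[OF cf V])
      show "sat X le R V x (And (Imp (Cond c a) (Cond c b)) (Imp (Cond c b) (Cond c a)))"
        using eq inX[OF up] by auto
    qed
  next
    case CandAx
    then show ?case unfolding valid_frame_def Iff_def by simp
  next
    case CtopAx
    then show ?case unfolding valid_frame_def Iff_def Top_def using lX by auto
  next
    case (ax1 a b) show ?case unfolding valid_frame_def
    proof (intro allI impI ballI)
      fix V :: "nat \<Rightarrow> _" and x assume V: "\<forall>n. upset X le (V n)" and x: "x \<in> X"
      show "sat X le R V x (Imp a (Imp b a))"
      proof (simp only: sat.simps, intro ballI impI)
        fix y z assume "y \<in> X" "le x y" "sat X le R V y a" "z \<in> X" "le y z" "sat X le R V z b"
        then show "sat X le R V z a" using persist[OF cf V, of y z a] by blast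
      qed
    qed
  next
    case (ax2 a b c) show ?case unfolding valid_frame_def
    proof (intro allI impI ballI)
      fix V :: "nat \<Rightarrow> _" and x assume V: "\<forall>n. upset X le (V n)" and x: "x \<in> X"
      show "sat X le R V x (Imp (Imp a (Imp b c)) (Imp (Imp a b) (Imp a c)))"
      proof (simp only: sat.simps, intro ballI impI)
        fix y z w assume "y \<in> X" "le x y" "\<forall>u\<in>X. le y u \<longrightarrow> sat X le R V u a \<longrightarrow> (\<forall>v\<in>X. le u v \<longrightarrow> sat X le R V v b \<longrightarrow> sat X le R V v c)"
          "z \<in> X" "le y z" "\<forall>u\<in>X. le z u \<longrightarrow> sat X le R V u a \<longrightarrow> sat X le R V u b" "w \<in> X" "le z w" "sat X le R V w a"
        then show "sat X le R V w c" using refl[of w] tr[of y z w] by blast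
      qed
    qed
  next
    case (ax8 a c b) show ?case unfolding valid_frame_def
    proof (intro allI impI ballI)
      fix V :: "nat \<Rightarrow> _" and x assume V: "\<forall>n. upset X le (V n)" and x: "x \<in> X"
      show "sat X le R V x (Imp (Imp a c) (Imp (Imp b c) (Imp (Or a b) c)))"
      proof (simp only: sat.simps, intro ballI impI)
        fix y z w assume "y \<in> X" "le x y" "\<forall>u\<in>X. le y u \<longrightarrow> sat X le R V u a \<longrightarrow> sat X le R V u c"
          "z \<in> X" "le y z" "\<forall>u\<in>X. le z u \<longrightarrow> sat X le R V u b \<longrightarrow> sat X le R V u c" "w \<in> X" "le z w" "sat X le R V w a \<or> sat X le R V w b"
        then show "sat X le R V w c" using refl[of w] tr[of y z w] by blast
      qed
    qed
  next
    case (ax5 a b) show ?case unfolding valid_frame_def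
    proof (intro allI impI ballI)
      fix V :: "nat \<Rightarrow> _" and x assume V: "\<forall>n. upset X le (V n)" and x: "x \<in> X"
      show "sat X le R V x (Imp a (Imp b (And a b)))"
      proof (simp only: sat.simps, intro ballI impI conjI)
        fix y z assume "y \<in> X" "le x y" "sat X le R V y a" "z \<in> X" "le y z" "sat X le R V z b"
        then show "sat X le R V z a" "sat X le R V z b" using persist[OF cf V, of y z a] by blast+
      qed
    qed
  qed (simp_all add: valid_frame_def)
qed



definition thy :: "form set \<Rightarrow> bool" where
  "thy S \<longleftrightarrow> sICL \<subseteq> S \<and> (\<forall>a b. Imp a b \<in> S \<longrightarrow> a \<in> S \<longrightarrow> b \<in> S)"

definition pth :: "form set \<Rightarrow> bool" where
  "pth P \<longleftrightarrow> thy P \<and> Bot \<notin> P \<and> (\<forall>a b. Or a b \<in> P \<longrightarrow> a \<in> P \<or> b \<in> P)"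

lemma L_ax1: "Imp a (Imp b a) \<in> sICL" by (simp add: sICL_def ICK_plus.ax1)
lemma L_ax2: "Imp (Imp a (Imp b c)) (Imp (Imp a b) (Imp a c)) \<in> sICL" by (simp add: sICL_def ICK_plus.ax2)
lemma L_ax3: "Imp (And a b) a \<in> sICL" by (simp add: sICL_def ICK_plus.ax3)
lemma L_ax4: "Imp (And a b) b \<in> sICL" by (simp add: sICL_def ICK_plus.ax4)
lemma L_ax5: "Imp a (Imp b (And a b)) \<in> sICL" by (simp add: sICL_def ICK_plus.ax5)
lemma L_ax6: "Imp a (Or a b) \<in> sICL" by (simp add: sICL_def ICK_plus.ax6)
lemma L_ax7: "Imp b (Or a b) \<in> sICL" by (simp add: sICL_def ICK_plus.ax7)
lemma L_ax8: "Imp (Imp a c) (Imp (Imp b c) (Imp (Or a b) c)) \<in> sICL" by (simp add: sICL_def ICK_plus.ax8)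
lemma L_ax9: "Imp Bot a \<in> sICL" by (simp add: sICL_def ICK_plus.ax9)
lemma L_mp: "Imp a b \<in> sICL \<Longrightarrow> a \<in> sICL \<Longrightarrow> b \<in> sICL" unfolding sICL_def by (rule ICK_plus.mp)

lemma thy_L: "thy sICL" unfolding thy_def using L_mp by blast
lemma thy_mp: "thy S \<Longrightarrow> Imp a b \<in> S \<Longrightarrow> a \<in> S \<Longrightarrow> b \<in> S" unfolding thy_def by blast
lemma thy_L_in: "thy S \<Longrightarrow> a \<in> sICL \<Longrightarrow> a \<in> S" unfolding thy_def by blast
lemma thy_Lmp: "thy S \<Longrightarrow> Imp a b \<in> sICL \<Longrightarrow> a \<in> S \<Longrightarrow> b \<in> S"
  using thy_mp thy_L_in by blast

lemma L_refl: "Imp a a \<in> sICL"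
  using L_mp[OF L_mp[OF L_ax2[of a "Imp a a" a] L_ax1[of a "Imp a a"]] L_ax1[of a a]] .

lemma ded_thy: assumes "thy S" shows "thy {c. Imp a c \<in> S}"
  unfolding thy_def
proof (intro conjI allI impI subsetI)
  fix c assume "c \<in> sICL"
  then show "c \<in> {c. Imp a c \<in> S}" using thy_Lmp[OF assms L_ax1[of c a] thy_L_in[OF assms]] by simp
next
  fix b c assume "Imp b c \<in> {c. Imp a c \<in> S}" "b \<in> {c. Imp a c \<in> S}"
  then show "c \<in> {c. Imp a c \<in> S}"
    using thy_mp[OF assms thy_Lmp[OF assms L_ax2[of a b c]]] by simp
qed

lemma ded_sub: "thy S \<Longrightarrow> S \<subseteq> {c. Imp a c \<in> S}"
  using thy_Lmp L_ax1 by blast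
lemma ded_in: "thy S \<Longrightarrow> a \<in> {c. Imp a c \<in> S}"
  using thy_L_in L_refl by blast

lemma thy_and: "thy S \<Longrightarrow> And a b \<in> S \<longleftrightarrow> a \<in> S \<and> b \<in> S"
  using thy_Lmp[OF _ L_ax3] thy_Lmp[OF _ L_ax4] thy_mp[OF _ thy_Lmp[OF _ L_ax5]] by blast

lemma L_trans: assumes "Imp a b \<in> sICL" "Imp b c \<in> sICL" shows "Imp a c \<in> sICL"
proof -
  let ?T = "{c. Imp a c \<in> sICL}"
  have t: "thy ?T" by (rule ded_thy[OF thy_L])
  have "b \<in> ?T" using thy_Lmp[OF t assms(1) ded_in[OF thy_L]] .
  then have "c \<in> ?T" using thy_Lmp[OF t assms(2)] by blast
  then show ?thesis by simp
qed

lemma Iff_L: "Iff a b \<in> sICL \<longleftrightarrow> Imp a b \<in> sICL \<and> Imp b a \<in> sICL"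
  unfolding Iff_def using thy_and[OF thy_L] by blast

lemma subst_Iff: "subst s (Iff a b) = Iff (subst s a) (subst s b)" by (simp add: Iff_def)
lemma subst_Top: "subst s Top = Top" by (simp add: Top_def)

lemma L_Cand: "Iff (Cond c (And a b)) (And (Cond c a) (Cond c b)) \<in> sICL"
proof -
  have "subst (\<lambda>n. if n = 0 then c else if n = 1 then a else b)
     (Iff (Cond (Var 0) (And (Var 1) (Var 2))) (And (Cond (Var 0) (Var 1)) (Cond (Var 0) (Var 2)))) \<in> sICL"
    unfolding sICL_def by (rule ICK_plus.usubst[OF ICK_plus.CandAx])
  then show ?thesis by (simp add: subst_Iff)
qed

lemma L_Ctop: "Cond c Top \<in> sICL"
proof -
  have "subst (\<lambda>n. c) (Iff (Cond (Var 0) Top) Top) \<in> sICL"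
    unfolding sICL_def by (rule ICK_plus.usubst[OF ICK_plus.CtopAx])
  then have "Imp Top (Cond c Top) \<in> sICL" by (simp add: subst_Iff subst_Top Iff_L)
  moreover have "Top \<in> sICL" unfolding Top_def by (rule L_refl)
  ultimately show ?thesis by (rule L_mp)
qed

lemma L_congL: "Iff a b \<in> sICL \<Longrightarrow> Imp (Cond a c) (Cond b c) \<in> sICL"
  unfolding sICL_def using ICK_plus.congL Iff_L sICL_def by metis

lemma L_congR: "Iff a b \<in> sICL \<Longrightarrow> Iff (Cond c a) (Cond c b) \<in> sICL"
  unfolding sICL_def using ICK_plus.congR by metis

lemma L_A1: "Imp q (Cond p q) \<in> sICL"
proof -
  have "subst (\<lambda>n. if n = 0 then p else q) (Imp (Var 1) (Cond (Var 0) (Var 1))) \<in> sICL"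
    unfolding sICL_def by (rule ICK_plus.usubst[OF ICK_plus.gamma]) simp
  then show ?thesis by simp
qed

lemma L_A2: "Imp (Cond p (Cond p q)) (Cond p q) \<in> sICL"
proof -
  have "subst (\<lambda>n. if n = 0 then p else q) (Imp (Cond (Var 0) (Cond (Var 0) (Var 1))) (Cond (Var 0) (Var 1))) \<in> sICL"
    unfolding sICL_def by (rule ICK_plus.usubst[OF ICK_plus.gamma]) simp
  then show ?thesis by simp
qed

lemma L_cond_mono: assumes "Imp a b \<in> sICL" shows "Imp (Cond c a) (Cond c b) \<in> sICL"
proof -
  have "Imp a (And a b) \<in> sICL"
  proof -
    let ?T = "{d. Imp a d \<in> sICL}"
    have t: "thy ?T" by (rule ded_thy[OF thy_L])
    have "a \<in> ?T" by (rule ded_in[OF thy_L])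
    moreover then have "b \<in> ?T" using thy_Lmp[OF t assms] by blast
    ultimately have "And a b \<in> ?T" using thy_and[OF t] by blast
    then show ?thesis by simp
  qed
  then have "Iff a (And a b) \<in> sICL" using Iff_L L_ax3 by blast
  then have 1: "Imp (Cond c a) (Cond c (And a b)) \<in> sICL" using L_congR Iff_L by blast
  have 2: "Imp (Cond c (And a b)) (And (Cond c a) (Cond c b)) \<in> sICL" using L_Cand Iff_L by blast
  show ?thesis using L_trans[OF L_trans[OF 1 2] L_ax4] .
qed

lemma thy_cond_and: "thy S \<Longrightarrow> Cond c a \<in> S \<Longrightarrow> Cond c b \<in> S \<Longrightarrow> Cond c (And a b) \<in> S"
proof -
  assume t: "thy S" "Cond c a \<in> S" "Cond c b \<in> S"
  then have "And (Cond c a) (Cond c b) \<in> S" using thy_and by blast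
  then show ?thesis using thy_Lmp[OF t(1)] L_Cand Iff_L by blast
qed

lemma L_mp_and: "Imp (And (Imp c d) c) d \<in> sICL"
proof -
  let ?T = "{e. Imp (And (Imp c d) c) e \<in> sICL}"
  have t: "thy ?T" by (rule ded_thy[OF thy_L])
  have "And (Imp c d) c \<in> ?T" by (rule ded_in[OF thy_L])
  then have "Imp c d \<in> ?T" "c \<in> ?T" using thy_and[OF t] by blast+
  then have "d \<in> ?T" using thy_mp[OF t] by blast
  then show ?thesis by simp
qed

lemma thy_condset: assumes "thy x" shows "thy {c. Cond a c \<in> x}"
  unfolding thy_def
proof (intro conjI allI impI subsetI)
  fix c assume "c \<in> sICL"
  then have "Imp Top c \<in> sICL" using L_mp[OF L_ax1] by blast
  then have "Imp (Cond a Top) (Cond a c) \<in> sICL" by (rule L_cond_mono)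
  then show "c \<in> {c. Cond a c \<in> x}" using thy_Lmp[OF assms] thy_L_in[OF assms L_Ctop] by blast
next
  fix c d assume "Imp c d \<in> {c. Cond a c \<in> x}" "c \<in> {c. Cond a c \<in> x}"
  then have "Cond a (And (Imp c d) c) \<in> x" using thy_cond_and[OF assms] by simp
  then show "d \<in> {c. Cond a c \<in> x}" using thy_Lmp[OF assms L_cond_mono[OF L_mp_and]] by simp
qed

lemma lindenbaum:
  assumes T: "thy T" and TD: "T \<inter> D = {}" and B: "Bot \<in> D"
    and dc: "\<And>c d. d \<in> D \<Longrightarrow> Imp c d \<in> sICL \<Longrightarrow> c \<in> D"
    and oc: "\<And>c d. c \<in> D \<Longrightarrow> d \<in> D \<Longrightarrow> Or c d \<in> D"
  shows "\<exists>P. pth P \<and> T \<subseteq> P \<and> P \<inter> D = {}"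
proof -
  let ?A = "{S. thy S \<and> T \<subseteq> S \<and> S \<inter> D = {}}"
  have "\<exists>M\<in>?A. \<forall>X\<in>?A. M \<subseteq> X \<longrightarrow> X = M"
  proof (rule subset_Zorn_nonempty)
    show "?A \<noteq> {}" using T TD by blast
  next
    fix C assume ne: "C \<noteq> {}" and ch: "subset.chain ?A C"
    then have CA: "C \<subseteq> ?A" and tot: "\<forall>X\<in>C. \<forall>Y\<in>C. X \<subseteq> Y \<or> Y \<subseteq> X"
      unfolding subset_chain_def by auto
    have "thy (\<Union>C)" unfolding thy_def
    proof (intro conjI allI impI)
      show "sICL \<subseteq> \<Union>C" using ne CA unfolding thy_def by blast
    next
      fix a b assume "Imp a b \<in> \<Union>C" "a \<in> \<Union>C"
      then obtain S1 S2 where "S1 \<in> C" "S2 \<in> C" "Imp a b \<in> S1" "a \<in> S2" by blast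
      then have S: "S1 \<in> C" "S2 \<in> C" "Imp a b \<in> S1" "a \<in> S2" .
      have t1: "thy S1" "thy S2" using S(1,2) CA by blast+
      from tot S(1,2) have "S1 \<subseteq> S2 \<or> S2 \<subseteq> S1" by blast
      then show "b \<in> \<Union>C"
      proof
        assume "S1 \<subseteq> S2"
        then have "b \<in> S2" using thy_mp[OF t1(2)] S(3,4) by blast
        then show ?thesis using S(2) by blast
      next
        assume "S2 \<subseteq> S1"
        then have "b \<in> S1" using thy_mp[OF t1(1)] S(3,4) by blast
        then show ?thesis using S(1) by blast
      qed
    qed
    moreover have "T \<subseteq> \<Union>C" using ne CA by blast
    moreover have "\<Union>C \<inter> D = {}" using CA by blast
    ultimately show "\<Union>C \<in> ?A" by simp
  qed
  then obtain M where MA: "M \<in> ?A" and max0: "\<forall>X\<in>?A. M \<subseteq> X \<longrightarrow> X = M" ..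
  note max = max0[rule_format]
  have tM: "thy M" using MA by blast
  have key: "\<exists>d\<in>D. Imp a d \<in> M" if "a \<notin> M" for a
  proof (rule ccontr)
    assume "\<not> ?thesis"
    then have "{c. Imp a c \<in> M} \<inter> D = {}" by blast
    moreover have "thy {c. Imp a c \<in> M}" by (rule ded_thy[OF tM])
    moreover have "M \<subseteq> {c. Imp a c \<in> M}" by (rule ded_sub[OF tM])
    ultimately have "{c. Imp a c \<in> M} \<in> ?A" using MA by blast
    then have "{c. Imp a c \<in> M} = M" using max ded_sub[OF tM] by blast
    then show False using ded_in[OF tM, of a] that by blast
  qed
  have "pth M" unfolding pth_def
  proof (intro conjI allI impI)
    show "thy M" by (rule tM)
    show "Bot \<notin> M" using MA B by blast
  next
    fix a b assume ab: "Or a b \<in> M"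
    show "a \<in> M \<or> b \<in> M"
    proof (rule ccontr)
      assume "\<not> ?thesis"
      then obtain d1 d2 where d: "d1 \<in> D" "d2 \<in> D" "Imp a d1 \<in> M" "Imp b d2 \<in> M" using key by blast
      have "Imp a (Or d1 d2) \<in> M"
      proof -
        let ?T = "{c. Imp a c \<in> M}"
        have "d1 \<in> ?T" using d by simp
        then have "Or d1 d2 \<in> ?T" using thy_Lmp[OF ded_thy[OF tM] L_ax6] by blast
        then show ?thesis by simp
      qed
      moreover have "Imp b (Or d1 d2) \<in> M"
      proof -
        let ?T = "{c. Imp b c \<in> M}"
        have "d2 \<in> ?T" using d by simp
        then have "Or d1 d2 \<in> ?T" using thy_Lmp[OF ded_thy[OF tM] L_ax7] by blast
        then show ?thesis by simp
      qed
      ultimately have "Or d1 d2 \<in> M"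
        using thy_mp[OF tM, OF thy_mp[OF tM, OF thy_mp[OF tM, OF thy_L_in[OF tM L_ax8]]] ab] by blast
      moreover have "Or d1 d2 \<in> D" using oc d by blast
      ultimately show False using MA by blast
    qed
  qed
  then show ?thesis using MA by blast
qed

lemma ext: assumes T: "thy T" and b: "b \<notin> T" shows "\<exists>P. pth P \<and> T \<subseteq> P \<and> b \<notin> P"
proof -
  let ?D = "{c. Imp c b \<in> sICL}"
  have "\<exists>P. pth P \<and> T \<subseteq> P \<and> P \<inter> ?D = {}"
  proof (rule lindenbaum[OF T])
    show "T \<inter> ?D = {}" using thy_Lmp[OF T] b by blast
    show "Bot \<in> ?D" using L_ax9 by simp
    show "\<And>c d. d \<in> ?D \<Longrightarrow> Imp c d \<in> sICL \<Longrightarrow> c \<in> ?D" using L_trans by blast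
    show "\<And>c d. c \<in> ?D \<Longrightarrow> d \<in> ?D \<Longrightarrow> Or c d \<in> ?D" using L_mp[OF L_mp[OF L_ax8]] by blast
  qed
  then show ?thesis using L_refl[of b] by blast
qed

definition CX :: "form set set" where "CX = {P. pth P}"
definition cle :: "form set \<Rightarrow> form set \<Rightarrow> bool" where
  "cle x y \<longleftrightarrow> x \<in> CX \<and> y \<in> CX \<and> x \<subseteq> y"
definition cR :: "form set set \<Rightarrow> form set \<Rightarrow> form set \<Rightarrow> bool" where
  "cR A x y \<longleftrightarrow> x \<in> CX \<and> y \<in> CX \<and> x \<subseteq> y \<and>
     (\<forall>\<phi> \<psi>. A = {z\<in>CX. \<phi> \<in> z} \<longrightarrow> Cond \<phi> \<psi> \<in> x \<longrightarrow> \<psi> \<in> y)"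
definition cV :: "nat \<Rightarrow> form set set" where "cV n = {z\<in>CX. Var n \<in> z}"

lemma CX_thy: "x \<in> CX \<Longrightarrow> thy x" unfolding CX_def pth_def by blast

lemma EQ: assumes "{z\<in>CX. a \<in> z} = {z\<in>CX. b \<in> z}" shows "Imp a b \<in> sICL"
proof (rule ccontr)
  assume "Imp a b \<notin> sICL"
  then have "b \<notin> {c. Imp a c \<in> sICL}" by simp
  then obtain P where "pth P" "{c. Imp a c \<in> sICL} \<subseteq> P" "b \<notin> P"
    using ext[OF ded_thy[OF thy_L]] by blast
  moreover then have "a \<in> P" using ded_in[OF thy_L, of a] by blast
  ultimately show False using assms unfolding CX_def by blast
qed

lemma transfer: assumes "{z\<in>CX. \<phi> \<in> z} = {z\<in>CX. a \<in> z}" "thy S" "Cond \<phi> \<psi> \<in> S"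
  shows "Cond a \<psi> \<in> S"
proof -
  have "Iff \<phi> a \<in> sICL" using EQ[OF assms(1)] EQ[OF assms(1)[symmetric]] Iff_L by blast
  then show ?thesis using L_congL thy_Lmp assms(2,3) by blast
qed

lemma truth: "x \<in> CX \<Longrightarrow> sat CX cle cR cV x \<phi> \<longleftrightarrow> \<phi> \<in> x"
proof (induction \<phi> arbitrary: x)
  case (Var n) then show ?case by (simp add: cV_def)
next
  case Bot then show ?case unfolding CX_def pth_def by simp
next
  case (And a b) then show ?case using thy_and[OF CX_thy] by simp
next
  case (Or a b)
  have "Or a b \<in> x \<longleftrightarrow> a \<in> x \<or> b \<in> x"
    using Or.prems CX_thy[OF Or.prems] thy_Lmp[OF _ L_ax6] thy_Lmp[OF _ L_ax7]
    unfolding CX_def pth_def by blast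
  then show ?case using Or by simp
next
  case (Imp a b)
  have tx: "thy x" using CX_thy[OF Imp.prems] .
  have "(\<forall>y\<in>CX. cle x y \<longrightarrow> a \<in> y \<longrightarrow> b \<in> y) \<longleftrightarrow> Imp a b \<in> x"
  proof
    assume H: "\<forall>y\<in>CX. cle x y \<longrightarrow> a \<in> y \<longrightarrow> b \<in> y"
    show "Imp a b \<in> x"
    proof (rule ccontr)
      assume "Imp a b \<notin> x"
      then obtain P where P: "pth P" "{c. Imp a c \<in> x} \<subseteq> P" "b \<notin> P"
        using ext[OF ded_thy[OF tx]] by blast
      have "a \<in> P" using P ded_in[OF tx] by blast
      moreover have "x \<subseteq> P" using P ded_sub[OF tx] by blast
      ultimately show False using H P Imp.prems unfolding cle_def CX_def by blast
    qed
  next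
    assume "Imp a b \<in> x"
    then show "\<forall>y\<in>CX. cle x y \<longrightarrow> a \<in> y \<longrightarrow> b \<in> y"
      using CX_thy thy_mp unfolding cle_def by blast
  qed
  then show ?case using Imp.IH Imp.prems unfolding cle_def by auto
next
  case (Cond a b)
  have tx: "thy x" using CX_thy[OF Cond.prems] .
  have eq: "{z\<in>CX. sat CX cle cR cV z a} = {z\<in>CX. a \<in> z}" using Cond.IH(1) by blast
  have "(\<forall>y. cR {z\<in>CX. a \<in> z} x y \<longrightarrow> b \<in> y) \<longleftrightarrow> Cond a b \<in> x"
  proof
    assume H: "\<forall>y. cR {z\<in>CX. a \<in> z} x y \<longrightarrow> b \<in> y"
    show "Cond a b \<in> x"
    proof (rule ccontr)
      assume "Cond a b \<notin> x"
      then have "b \<notin> {c. Cond a c \<in> x}" by simp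
      from ext[OF thy_condset[OF tx] this] obtain P where P: "pth P" "{c. Cond a c \<in> x} \<subseteq> P" "b \<notin> P"
        by blast
      have "cR {z\<in>CX. a \<in> z} x P" unfolding cR_def
      proof (intro conjI allI impI)
        show "x \<in> CX" by (rule Cond.prems)
        show "P \<in> CX" using P unfolding CX_def by blast
        show "x \<subseteq> P"
        proof
          fix c assume "c \<in> x"
          then have "Cond a c \<in> x" by (rule thy_Lmp[OF tx L_A1])
          then show "c \<in> P" using P(2) by blast
        qed
      next
        fix \<phi> \<psi> assume "{z\<in>CX. a \<in> z} = {z\<in>CX. \<phi> \<in> z}" "Cond \<phi> \<psi> \<in> x"
        then have "Cond a \<psi> \<in> x" using transfer[OF _ tx] by metis
        then show "\<psi> \<in> P" using P(2) by blast
      qed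
      then show False using H P by blast
    qed
  next
    assume ab: "Cond a b \<in> x"
    show "\<forall>y. cR {z\<in>CX. a \<in> z} x y \<longrightarrow> b \<in> y"
    proof (intro allI impI)
      fix y assume "cR {z\<in>CX. a \<in> z} x y"
      then have "\<forall>\<phi> \<psi>. {z\<in>CX. a \<in> z} = {z\<in>CX. \<phi> \<in> z} \<longrightarrow> Cond \<phi> \<psi> \<in> x \<longrightarrow> \<psi> \<in> y"
        unfolding cR_def by (elim conjE)
      then show "b \<in> y" using ab by simp
    qed
  qed
  moreover have "\<And>y. cR {z\<in>CX. a \<in> z} x y \<Longrightarrow> sat CX cle cR cV y b \<longleftrightarrow> b \<in> y"
  proof -
    fix y assume "cR {z\<in>CX. a \<in> z} x y"
    then have "y \<in> CX" unfolding cR_def by (elim conjE)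
    then show "sat CX cle cR cV y b \<longleftrightarrow> b \<in> y" by (rule Cond.IH(2))
  qed
  ultimately have "(\<forall>y. cR {z\<in>CX. a \<in> z} x y \<longrightarrow> sat CX cle cR cV y b) \<longleftrightarrow> Cond a b \<in> x"
    by (meson)
  then show ?case by (simp only: sat.simps eq)
qed



lemma dens:
  assumes R: "cR A x y"
  shows "\<exists>u v. cR A x u \<and> cR A u v \<and> cle v y"
proof (cases "\<exists>\<phi>. A = {z\<in>CX. \<phi> \<in> z}")
  case False
  have "cR A y y" using R False unfolding cR_def by blast
  moreover have "cle y y" using R unfolding cR_def cle_def by blast
  ultimately show ?thesis using R by blast
next
  case True
  then obtain \<phi> where A: "A = {z\<in>CX. \<phi> \<in> z}" by blast
  have xX: "x \<in> CX" and yX: "y \<in> CX" and xy: "x \<subseteq> y"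
    and Rx: "\<And>\<psi>. Cond \<phi> \<psi> \<in> x \<Longrightarrow> \<psi> \<in> y" using R A unfolding cR_def by blast+
  have tx: "thy x" by (rule CX_thy[OF xX])
  have ty: "thy y" by (rule CX_thy[OF yX])
  have yB: "Bot \<notin> y" and yP: "\<And>a b. Or a b \<in> y \<Longrightarrow> a \<in> y \<or> b \<in> y"
    using yX unfolding CX_def pth_def by blast+
  let ?C = "{c. Cond \<phi> c \<in> x}"
  let ?D = "{c. \<exists>\<psi>. \<psi> \<notin> y \<and> Imp c (Cond \<phi> \<psi>) \<in> sICL}"
  have "\<exists>P. pth P \<and> ?C \<subseteq> P \<and> P \<inter> ?D = {}"
  proof (rule lindenbaum[OF thy_condset[OF tx]])
    show "?C \<inter> ?D = {}"
    proof (rule ccontr)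
      assume "?C \<inter> ?D \<noteq> {}"
      then obtain c \<psi> where c: "Cond \<phi> c \<in> x" "\<psi> \<notin> y" "Imp c (Cond \<phi> \<psi>) \<in> sICL" by blast
      have "Cond \<phi> (Cond \<phi> \<psi>) \<in> x" using thy_Lmp[OF tx L_cond_mono[OF c(3)] c(1)] .
      then have "Cond \<phi> \<psi> \<in> x" using thy_Lmp[OF tx L_A2] by blast
      then show False using Rx c(2) by blast
    qed
    show "Bot \<in> ?D" using yB L_ax9 by blast
    show "\<And>c d. d \<in> ?D \<Longrightarrow> Imp c d \<in> sICL \<Longrightarrow> c \<in> ?D"
    proof -
      fix c d assume "d \<in> ?D" "Imp c d \<in> sICL"
      then obtain \<psi> where "\<psi> \<notin> y" "Imp d (Cond \<phi> \<psi>) \<in> sICL" "Imp c d \<in> sICL" by blast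
      then show "c \<in> ?D" using L_trans by blast
    qed
    show "\<And>c d. c \<in> ?D \<Longrightarrow> d \<in> ?D \<Longrightarrow> Or c d \<in> ?D"
    proof -
      fix c d assume "c \<in> ?D" "d \<in> ?D"
      then obtain \<psi>1 \<psi>2 where p: "\<psi>1 \<notin> y" "Imp c (Cond \<phi> \<psi>1) \<in> sICL"
         "\<psi>2 \<notin> y" "Imp d (Cond \<phi> \<psi>2) \<in> sICL" by blast
      have n: "Or \<psi>1 \<psi>2 \<notin> y" using p yP by blast
      have 1: "Imp c (Cond \<phi> (Or \<psi>1 \<psi>2)) \<in> sICL"
        using L_trans[OF p(2) L_cond_mono[OF L_ax6]] .
      have 2: "Imp d (Cond \<phi> (Or \<psi>1 \<psi>2)) \<in> sICL"
        using L_trans[OF p(4) L_cond_mono[OF L_ax7]] .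
      have "Imp (Or c d) (Cond \<phi> (Or \<psi>1 \<psi>2)) \<in> sICL"
        using L_mp[OF L_mp[OF L_ax8 1] 2] .
      then show "Or c d \<in> ?D" using n by blast
    qed
  qed
  then obtain u where u: "pth u" "?C \<subseteq> u" "u \<inter> ?D = {}" by blast
  have uX: "u \<in> CX" using u unfolding CX_def by blast
  have tu: "thy u" by (rule CX_thy[OF uX])
  have xu: "x \<subseteq> u"
  proof
    fix c assume "c \<in> x"
    then have "Cond \<phi> c \<in> x" by (rule thy_Lmp[OF tx L_A1])
    then show "c \<in> u" using u(2) by blast
  qed
  have uy: "u \<subseteq> y"
  proof
    fix c assume cu: "c \<in> u"
    show "c \<in> y"
    proof (rule ccontr)
      assume "c \<notin> y"
      then have "c \<in> ?D" using L_A1[of c \<phi>] by blast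
      then show False using u(3) cu by blast
    qed
  qed
  have "cR A x u" unfolding cR_def
  proof (intro conjI allI impI)
    show "x \<in> CX" "u \<in> CX" "x \<subseteq> u" by (fact xX, fact uX, fact xu)
  next
    fix \<phi>' \<psi> assume "A = {z\<in>CX. \<phi>' \<in> z}" "Cond \<phi>' \<psi> \<in> x"
    then have "Cond \<phi> \<psi> \<in> x" using transfer[OF _ tx] A by metis
    then show "\<psi> \<in> u" using u(2) by blast
  qed
  moreover have "cR A u y" unfolding cR_def
  proof (intro conjI allI impI)
    show "u \<in> CX" "y \<in> CX" "u \<subseteq> y" by (fact uX, fact yX, fact uy)
  next
    fix \<phi>' \<psi> assume "A = {z\<in>CX. \<phi>' \<in> z}" "Cond \<phi>' \<psi> \<in> u"
    then have cu: "Cond \<phi> \<psi> \<in> u" using transfer[OF _ tu] A by metis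
    show "\<psi> \<in> y"
    proof (rule ccontr)
      assume "\<psi> \<notin> y"
      then have "Cond \<phi> \<psi> \<in> ?D" using L_refl[of "Cond \<phi> \<psi>"] by blast
      then show False using u(3) cu by blast
    qed
  qed
  moreover have "cle y y" using yX unfolding cle_def by blast
  ultimately show ?thesis by blast
qed

lemma canon_frame: assumes "b \<notin> sICL" shows "sICL_frame CX cle cR"
proof -
  have ne: "CX \<noteq> {}" using ext[OF thy_L assms] unfolding CX_def by blast
  have leX: "\<forall>x y. cle x y \<longrightarrow> x \<in> CX \<and> y \<in> CX" unfolding cle_def by blast
  have refl: "\<forall>x\<in>CX. cle x x" unfolding cle_def by blast
  have tr: "\<forall>x y z. cle x y \<longrightarrow> cle y z \<longrightarrow> cle x z" unfolding cle_def by blast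
  have RX: "\<forall>A. upset CX cle A \<longrightarrow> (\<forall>x y. cR A x y \<longrightarrow> x \<in> CX \<and> y \<in> CX)" unfolding cR_def by blast
  have mono: "\<forall>A. upset CX cle A \<longrightarrow> (\<forall>x y z. cle x y \<longrightarrow> cR A y z \<longrightarrow> (\<exists>w. cR A x w \<and> cle w z))"
  proof (intro allI impI)
    fix A x y z assume "cle x y" "cR A y z"
    then have "cR A x z" "cle z z" unfolding cR_def cle_def by blast+
    then show "\<exists>w. cR A x w \<and> cle w z" by blast
  qed
  have Rle: "\<forall>A. upset CX cle A \<longrightarrow> (\<forall>x\<in>CX. \<forall>y\<in>CX. cR A x y \<longrightarrow> cle x y) \<and>
        (\<forall>x\<in>CX. \<forall>y\<in>CX. cR A x y \<longrightarrow> (\<exists>u v. cR A x u \<and> cR A u v \<and> cle v y))"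
    using dens unfolding cR_def cle_def by blast
  have cf: "cond_frame CX cle cR" unfolding cond_frame_def
    using ne leX refl tr RX mono by (intro conjI)
  show ?thesis unfolding sICL_frame_def using cf Rle by (intro conjI)
qed

lemma completeness:
  assumes H: "\<forall>(X::form set set) le R. sICL_frame X le R \<longrightarrow> valid_frame X le R \<phi>"
  shows "\<phi> \<in> sICL"
proof (rule ccontr)
  assume n: "\<phi> \<notin> sICL"
  have F: "sICL_frame CX cle cR" by (rule canon_frame[OF n])
  have V: "\<forall>k. upset CX cle (cV k)" unfolding upset_def cV_def cle_def by blast
  obtain P where P: "pth P" "\<phi> \<notin> P" using ext[OF thy_L n] by blast
  have PX: "P \<in> CX" using P unfolding CX_def by blast
  have "sat CX cle cR cV P \<phi>" using H F V PX unfolding valid_frame_def by blast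
  then show False using truth[OF PX] P by blast
qed


theorem theorem7p17:
  fixes \<phi> :: form
  shows "(\<phi> \<in> sICL \<longrightarrow>
            (\<forall>(X::'w set) le R. sICL_frame X le R \<longrightarrow> valid_frame X le R \<phi>))
       \<and> ((\<forall>(X::form set set) le R. sICL_frame X le R \<longrightarrow> valid_frame X le R \<phi>)
            \<longrightarrow> \<phi> \<in> sICL)"
  using soundness completeness by blast

end
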